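(* Let $\nu>0$ and let $U(x,t)=\sum_{i=0}^\infty\sum_{k=0}^\infty U_{i,k}x^it^k$ be a given formal power series. For every choice of complex numbers $A_{i,1,k}$ ($i,k\ge 0$) there exist unique formal power series \[u=\sum_{i\ge0}\sum_{j\ge1}\sum_{k\ge0}A_{i,j,k}x^iy^jt^k,\qquad v=\sum_{i\ge0}\sum_{j\ge1}\sum_{k\ge0}B_{i,j,k}x^iy^jt^k\] (so that $u=v=0$ at $y=0$) with the prescribed coefficients $A_{i,1,k}$, satisfying, as identities of formal power series in $x,y,t$, Prandtl's boundary layer equations \[ u\frac{\partial u}{\partial x}+v\frac{\partial u}{\partial y}+\frac{\partial u}{\partial t}=\frac{\partial U}{\partial t}+U\frac{\partial U}{\partial x}+\nu\frac{\partial^2u}{\partial y^2},\qquad \frac{\partial u}{\partial x}+\frac{\partial v}{\partial y}=0 . \] Moreover, for all $i,k\ge0$: $B_{i,1,k}=0$; \[A_{i,2,k}=-\frac{1}{2\nu}\Big(U_{i,k+1}(k+1)+\sum_{p=0}^{i}\sum_{q=0}^{k}(i-p+1)U_{p,q}U_{i-p+1,k-q}\Big);\qquad A_{i,3,k}=\frac{(k+1)A_{i,1,k+1}}{6\nu};\] $B_{i,j,k}=-\frac{i+1}{j}A_{i+1,j-1,k}$ for $j\ge2$; and for $j\ge4$, \[ A_{i,j,k}=\frac{1}{\nu j(j-1)}\Big(A_{i,j-2,k+1}(k+1)+\sum_{p=0}^{i}\sum_{q=1}^{j-3}\sum_{r=0}^{k}(i-p+1)A_{p,q,r}A_{i-p+1,j-2-q,k-r}-\sum_{p=0}^{i}\sum_{q=2}^{j-2}\sum_{r=0}^{k}\frac{(p+1)(j-1-q)}{q}A_{p+1,q-1,r}A_{i-p,j-1-q,k-r}\Big).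 \]
   Context: Here $u,v$ are the velocity components in a two-dimensional boundary layer along a wall $y=0$, $U(x,t)$ is the external (outer) flow velocity, and the pressure gradient has been eliminated using $-\frac1\rho\frac{\partial P}{\partial x}=\frac{\partial U}{\partial t}+U\frac{\partial U}{\partial x}$. In the paper, the free coefficients $A_{i,1,k}$ are intended to be fixed by matching $u$ to the external flow $U$ away from the wall. *)

theory Defs
  imports Complex_Main
begin

text \<open>A formal power series in x, y, t with complex coefficients is represented by its
coefficient function: f i j k is the coefficient of x^i y^j t^k.\<close>

type_synonym ps3 = "nat \<Rightarrow> nat \<Rightarrow> nat \<Rightarrow> complex"

definition ps3_mult :: "ps3 \<Rightarrow> ps3 \<Rightarrow> ps3" where
  "ps3_mult f g i j k =
     (\<Sum>a\<le>i. \<Sum>b\<le>j. \<Sum>c\<le>k. f a b c * g (i - a) (j - b) (k - c))"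

definition ps3_dx :: "ps3 \<Rightarrow> ps3" where
  "ps3_dx f i j k = of_nat (Suc i) * f (Suc i) j k"

definition ps3_dy :: "ps3 \<Rightarrow> ps3" where
  "ps3_dy f i j k = of_nat (Suc j) * f i (Suc j) k"

definition ps3_dt :: "ps3 \<Rightarrow> ps3" where
  "ps3_dt f i j k = of_nat (Suc k) * f i j (Suc k)"

definition ps3_of_xt :: "(nat \<Rightarrow> nat \<Rightarrow> complex) \<Rightarrow> ps3" where
  "ps3_of_xt U i j k = (if j = 0 then U i k else 0)"

definition prandtl :: "real \<Rightarrow> (nat \<Rightarrow> nat \<Rightarrow> complex) \<Rightarrow> ps3 \<Rightarrow> ps3 \<Rightarrow> bool" where
  "prandtl \<nu> U u v \<longleftrightarrow>
     (\<forall>i j k.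
        ps3_mult u (ps3_dx u) i j k + ps3_mult v (ps3_dy u) i j k + ps3_dt u i j k
        = ps3_dt (ps3_of_xt U) i j k + ps3_mult (ps3_of_xt U) (ps3_dx (ps3_of_xt U)) i j k
          + complex_of_real \<nu> * ps3_dy (ps3_dy u) i j k) \<and>
     (\<forall>i j k. ps3_dx u i j k + ps3_dy v i j k = 0)"

end

theory Submission
  imports Defs
begin

definition F2 :: "real \<Rightarrow> (nat \<Rightarrow> nat \<Rightarrow> complex) \<Rightarrow> nat \<Rightarrow> nat \<Rightarrow> complex" where
 "F2 \<nu> U i k = - (1 / (2 * complex_of_real \<nu>)) *
              (U i (k + 1) * of_nat (k + 1) +
               (\<Sum>p\<le>i. \<Sum>q\<le>k. of_nat (i - p + 1) * U p q * U (i - p + 1) (k - q)))"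
definition F3 :: "real \<Rightarrow> (nat \<Rightarrow> nat \<Rightarrow> complex) \<Rightarrow> nat \<Rightarrow> nat \<Rightarrow> complex" where
 "F3 \<nu> A1 i k = of_nat (k + 1) * A1 i (k + 1) / (6 * complex_of_real \<nu>)"
definition F4 :: "real \<Rightarrow> ps3 \<Rightarrow> nat \<Rightarrow> nat \<Rightarrow> nat \<Rightarrow> complex" where
 "F4 \<nu> A i j k = 1 / (complex_of_real \<nu> * of_nat j * of_nat (j - 1)) *
             (A i (j - 2) (k + 1) * of_nat (k + 1)
              + (\<Sum>p\<le>i. \<Sum>q\<in>{1..j - 3}. \<Sum>r\<le>k.
                   of_nat (i - p + 1) * A p q r * A (i - p + 1) (j - 2 - q) (k - r))
              - (\<Sum>p\<le>i. \<Sum>q\<in>{2..j - 2}. \<Sum>r\<le>k.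
                   of_nat ((p + 1) * (j - 1 - q)) / of_nat q
                   * A (p + 1) (q - 1) r * A (i - p) (j - 1 - q) (k - r)))"
definition G :: "real \<Rightarrow> (nat \<Rightarrow> nat \<Rightarrow> complex) \<Rightarrow> (nat \<Rightarrow> nat \<Rightarrow> complex) \<Rightarrow> ps3 \<Rightarrow> nat \<Rightarrow> nat \<Rightarrow> nat \<Rightarrow> complex" where
 "G \<nu> U A1 A i j k = (if j = 0 then 0 else if j = 1 then A1 i k else if j = 2 then F2 \<nu> U i k
    else if j = 3 then F3 \<nu> A1 i k else F4 \<nu> A i j k)"

lemma G_cong[fundef_cong]:
  assumes "j = j'" "\<And>p q r. q < j' \<Longrightarrow> A p q r = A' p q r"
  shows "G \<nu> U A1 A i j k = G \<nu> U A1 A' i j' k"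
proof (cases "j < 4")
  case True then show ?thesis using assms(1) by (simp add: G_def)
next
  case False
  have e1: "A i (j - 2) (k + 1) = A' i (j - 2) (k + 1)" using False assms by auto
  have e2: "(\<Sum>p\<le>i. \<Sum>q\<in>{1..j - 3}. \<Sum>r\<le>k.
                   of_nat (i - p + 1) * A p q r * A (i - p + 1) (j - 2 - q) (k - r)) =
      (\<Sum>p\<le>i. \<Sum>q\<in>{1..j - 3}. \<Sum>r\<le>k.
                   of_nat (i - p + 1) * A' p q r * A' (i - p + 1) (j - 2 - q) (k - r))"
    by (intro sum.cong refl) (use False assms in auto)
  have e3: "(\<Sum>p\<le>i. \<Sum>q\<in>{2..j - 2}. \<Sum>r\<le>k.
                   of_nat ((p + 1) * (j - 1 - q)) / of_nat q
                   * A (p + 1) (q - 1) r * A (i - p) (j - 1 - q) (k - r)) =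
      (\<Sum>p\<le>i. \<Sum>q\<in>{2..j - 2}. \<Sum>r\<le>k.
                   of_nat ((p + 1) * (j - 1 - q)) / of_nat q
                   * A' (p + 1) (q - 1) r * A' (i - p) (j - 1 - q) (k - r))"
    by (intro sum.cong refl) (use False assms in auto)
  show ?thesis using False assms(1) unfolding G_def F4_def e1 e2 e3 by simp
qed

function solA :: "real \<Rightarrow> (nat \<Rightarrow> nat \<Rightarrow> complex) \<Rightarrow> (nat \<Rightarrow> nat \<Rightarrow> complex) \<Rightarrow> nat \<Rightarrow> nat \<Rightarrow> nat \<Rightarrow> complex" where
  "solA \<nu> U A1 i j k = G \<nu> U A1 (solA \<nu> U A1) i j k"
  by pat_completeness auto
termination by (relation "measure (\<lambda>(\<nu>,U,A1,i,j,k). j)") auto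

lemma sum_split01: "(m::nat) \<ge> 1 \<Longrightarrow> sum f {..m} = f 0 + sum f {1..m-1} + f m"
proof -
  assume "m \<ge> 1"
  then obtain n where m: "m = Suc n" by (cases m) auto
  have "sum f {..n} = f 0 + sum f {1..n}"
    by (simp add: atMost_atLeast0 sum.atLeast_Suc_atMost)
  then show ?thesis by (simp add: m)
qed

lemma sum_split012: "(m::nat) \<ge> 1 \<Longrightarrow> sum f {..m} = f 0 + f 1 + sum f {2..m}"
proof -
  assume "m \<ge> 1"
  then have "sum f {..m} = f 0 + sum f {1..m}"
    by (simp add: atMost_atLeast0 sum.atLeast_Suc_atMost)
  also have "sum f {1..m} = f 1 + sum f {2..m}" using \<open>m\<ge>1\<close>
    by (simp add: sum.atLeast_Suc_atMost numeral_2_eq_2)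
  finally show ?thesis by (simp add: add.assoc)
qed

lemma mult_dx_m:
  assumes A0: "\<And>i k. A i 0 k = 0" and m: "m \<ge> 1"
  shows "ps3_mult A (ps3_dx A) i m k = (\<Sum>p\<le>i. \<Sum>q\<in>{1..m-1}. \<Sum>r\<le>k.
     of_nat (i - p + 1) * A p q r * A (i - p + 1) (m - q) (k - r))"
  unfolding ps3_mult_def ps3_dx_def
proof (rule sum.cong[OF refl])
  fix a assume "a \<in> {..i}"
  show "(\<Sum>b\<le>m. \<Sum>c\<le>k. A a b c * (of_nat (Suc (i - a)) * A (Suc (i - a)) (m - b) (k - c))) =
    (\<Sum>q\<in>{1..m-1}. \<Sum>r\<le>k. of_nat (i - a + 1) * A a q r * A (i - a + 1) (m - q) (k - r))"
    by (subst sum_split01[OF m]) (simp add: A0 algebra_simps)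
qed

lemma mult_dy_m:
  assumes B0: "\<And>i k. B i 0 k = 0" and B1: "\<And>i k. B i 1 k = 0"
    and Bf: "\<And>i j k. j \<ge> 2 \<Longrightarrow> B i j k = - (of_nat (i + 1) / of_nat j) * A (i + 1) (j - 1) k"
    and m: "m \<ge> 1"
  shows "ps3_mult B (ps3_dy A) i m k = - (\<Sum>p\<le>i. \<Sum>q\<in>{2..m}. \<Sum>r\<le>k.
     of_nat ((p + 1) * (m + 1 - q)) / of_nat q * A (p + 1) (q - 1) r * A (i - p) (m + 1 - q) (k - r))"
  unfolding ps3_mult_def ps3_dy_def
proof (subst sum_negf[symmetric], rule sum.cong[OF refl])
  fix a assume "a \<in> {..i}"
  have B1': "\<And>i k. B i (Suc 0) k = 0" using B1 by simp
  have "(\<Sum>b\<in>{2..m}. \<Sum>c\<le>k. B a b c * (of_nat (Suc (m - b)) * A (i - a) (Suc (m - b)) (k - c))) =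
    (\<Sum>q\<in>{2..m}. - (\<Sum>r\<le>k. of_nat ((a + 1) * (m + 1 - q)) / of_nat q * A (a + 1) (q - 1) r * A (i - a) (m + 1 - q) (k - r)))"
  proof (rule sum.cong[OF refl])
    fix b assume b: "b \<in> {2..m}"
    then have s: "Suc (m - b) = m + 1 - b" by auto
    have s3: "(of_nat (m+1-b)::complex) = (of_nat m + 1 - of_nat b)"
      using b by (simp add: of_nat_diff)
    have s2: "(of_nat ((a+1)*(m+1-b))::complex) = (of_nat a + 1) * (of_nat m + 1 - of_nat b)"
      by (simp only: of_nat_mult s3) simp
    show "(\<Sum>c\<le>k. B a b c * (of_nat (Suc (m - b)) * A (i - a) (Suc (m - b)) (k - c))) =
      - (\<Sum>r\<le>k. of_nat ((a + 1) * (m + 1 - b)) / of_nat b * A (a + 1) (b - 1) r * A (i - a) (m + 1 - b) (k - r))"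
      unfolding s sum_negf[symmetric] s2 s3 using b by (intro sum.cong refl) (simp add: Bf field_simps)
  qed
  then show "(\<Sum>b\<le>m. \<Sum>c\<le>k. B a b c * (of_nat (Suc (m - b)) * A (i - a) (Suc (m - b)) (k - c))) =
    - (\<Sum>q\<in>{2..m}. \<Sum>r\<le>k. of_nat ((a + 1) * (m + 1 - q)) / of_nat q * A (a + 1) (q - 1) r * A (i - a) (m + 1 - q) (k - r))"
    by (subst sum_split012[OF m]) (simp add: B0 B1' sum_negf)
qed

lemma ext_dt: "ps3_dt (ps3_of_xt U) i j k = (if j = 0 then of_nat (k + 1) * U i (k + 1) else 0)"
  by (simp add: ps3_dt_def ps3_of_xt_def)

lemma ext_mult: "ps3_mult (ps3_of_xt U) (ps3_dx (ps3_of_xt U)) i j k =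
   (if j = 0 then (\<Sum>p\<le>i. \<Sum>q\<le>k. of_nat (i - p + 1) * U p q * U (i - p + 1) (k - q)) else 0)"
proof (cases "j = 0")
  case True
  then show ?thesis unfolding ps3_mult_def ps3_dx_def ps3_of_xt_def
    by (simp add: mult.commute mult.left_commute)
next
  case False
  have z: "\<And>a b c. b \<le> j \<Longrightarrow> ps3_of_xt U a b c * ps3_dx (ps3_of_xt U) (i - a) (j - b) (k - c) = 0"
    using False unfolding ps3_dx_def ps3_of_xt_def by auto
  show ?thesis using False unfolding ps3_mult_def
    by (simp only: if_False) (intro sum.neutral ballI, simp add: z)
qed

lemma solve_lin: "(c::complex) \<noteq> 0 \<Longrightarrow> (X = c * a) \<longleftrightarrow> (a = 1 / c * X)"
  by (auto simp: field_simps)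

definition momeq :: "real \<Rightarrow> (nat \<Rightarrow> nat \<Rightarrow> complex) \<Rightarrow> ps3 \<Rightarrow> ps3 \<Rightarrow> nat \<Rightarrow> nat \<Rightarrow> nat \<Rightarrow> bool" where
  "momeq \<nu> U u v i j k \<longleftrightarrow>
        ps3_mult u (ps3_dx u) i j k + ps3_mult v (ps3_dy u) i j k + ps3_dt u i j k
        = ps3_dt (ps3_of_xt U) i j k + ps3_mult (ps3_of_xt U) (ps3_dx (ps3_of_xt U)) i j k
          + complex_of_real \<nu> * ps3_dy (ps3_dy u) i j k"

lemma prandtl_iff: "prandtl \<nu> U u v \<longleftrightarrow> (\<forall>i j k. momeq \<nu> U u v i j k) \<and>
   (\<forall>i j k. ps3_dx u i j k + ps3_dy v i j k = 0)"
  unfolding prandtl_def momeq_def by blast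

lemma cont_iff: "ps3_dx u i j k + ps3_dy v i j k = 0 \<longleftrightarrow>
   v i (j + 1) k = - (of_nat (i + 1) / of_nat (j + 1)) * u (i + 1) j k"
proof -
  have c: "(of_nat (Suc j)::complex) \<noteq> 0" by (simp del: of_nat_Suc)
  have g: "\<And>a x (c::complex). c \<noteq> 0 \<Longrightarrow> (a + c * x = 0) \<longleftrightarrow> (x = - (a / c))"
    by (auto simp: field_simps add_eq_0_iff)
  show ?thesis unfolding ps3_dx_def ps3_dy_def g[OF c] by (simp add: field_simps del: of_nat_Suc)
qed

context
  fixes \<nu> :: real and U :: "nat \<Rightarrow> nat \<Rightarrow> complex" and A B :: ps3
  assumes nu: "\<nu> > 0"
    and A0: "\<And>i k. A i 0 k = 0" and B0: "\<And>i k. B i 0 k = 0" and B1: "\<And>i k. B i 1 k = 0"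
    and BfH: "\<forall>i j k. j \<ge> 2 \<longrightarrow> B i j k = - (of_nat (i + 1) / of_nat j) * A (i + 1) (j - 1) k"
begin

lemma Bf: "j \<ge> 2 \<Longrightarrow> B i j k = - (of_nat (i + 1) / of_nat j) * A (i + 1) (j - 1) k"
  using BfH by blast

lemma mom0: "momeq \<nu> U A B i 0 k \<longleftrightarrow> A i 2 k = F2 \<nu> U i k"
proof -
  have c: "complex_of_real \<nu> * 2 \<noteq> 0" using nu by simp
  have "momeq \<nu> U A B i 0 k \<longleftrightarrow> - (of_nat (k + 1) * U i (k + 1) +
      (\<Sum>p\<le>i. \<Sum>q\<le>k. of_nat (i - p + 1) * U p q * U (i - p + 1) (k - q))) = (complex_of_real \<nu> * 2) * A i 2 k"
  proof -
    have l0: "ps3_mult A (ps3_dx A) i 0 k = 0" by (simp add: ps3_mult_def A0)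
    have l1: "ps3_mult B (ps3_dy A) i 0 k = 0" by (simp add: ps3_mult_def B0)
    have l2: "ps3_dt A i 0 k = 0" by (simp add: ps3_dt_def A0)
    have l3: "ps3_dy (ps3_dy A) i 0 k = 2 * A i 2 k" by (simp add: ps3_dy_def numeral_2_eq_2)
    have zz: "\<And>(a::complex) s n x. (0 + 0 + 0 = a + s + n * (2 * x)) \<longleftrightarrow> (- (a + s) = (n * 2) * x)"
      by (simp only: neg_eq_iff_add_eq_0 add_0_left mult.assoc eq_commute[of 0])
    show ?thesis unfolding momeq_def ext_dt ext_mult l0 l1 l2 l3 simp_thms(6) if_True zz ..
  qed
  also have "\<dots> \<longleftrightarrow> A i 2 k = F2 \<nu> U i k"
    unfolding solve_lin[OF c] F2_def by (simp add: algebra_simps)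
  finally show ?thesis .
qed

lemma mom1: "momeq \<nu> U A B i 1 k \<longleftrightarrow> A i 3 k = of_nat (k + 1) * A i 1 (k + 1) / (6 * complex_of_real \<nu>)"
proof -
  have c: "complex_of_real \<nu> * 6 \<noteq> 0" using nu by simp
  have "momeq \<nu> U A B i 1 k \<longleftrightarrow> of_nat (k + 1) * A i 1 (k + 1) = (complex_of_real \<nu> * 6) * A i 3 k"
    unfolding momeq_def ext_dt ext_mult
    using mult_dx_m[where A=A and m=1 and i=i and k=k, OF A0] mult_dy_m[where B=B and A=A and m=1 and i=i and k=k, OF B0 B1 Bf]
    by (simp add: ps3_dt_def ps3_dy_def numeral_3_eq_3 algebra_simps)
  also have "\<dots> \<longleftrightarrow> A i 3 k = of_nat (k + 1) * A i 1 (k + 1) / (6 * complex_of_real \<nu>)"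
    unfolding solve_lin[OF c] by (simp add: field_simps)
  finally show ?thesis .
qed

lemma momm:
  assumes m: "m \<ge> 2"
  shows "momeq \<nu> U A B i m k \<longleftrightarrow> A i (m + 2) k = F4 \<nu> A i (m + 2) k"
proof -
  define S1 where "S1 = (\<Sum>p\<le>i. \<Sum>q\<in>{1..m-1}. \<Sum>r\<le>k.
     of_nat (i - p + 1) * A p q r * A (i - p + 1) (m - q) (k - r))"
  define S2 where "S2 = (\<Sum>p\<le>i. \<Sum>q\<in>{2..m}. \<Sum>r\<le>k.
     of_nat ((p + 1) * (m + 1 - q)) / of_nat q * A (p + 1) (q - 1) r * A (i - p) (m + 1 - q) (k - r))"
  define c where "c = complex_of_real \<nu> * of_nat (m + 2) * of_nat (m + 2 - 1)"
  have c0: "c \<noteq> 0" using nu unfolding c_def by (simp del: of_nat_Suc of_nat_add)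
  have L: "ps3_mult A (ps3_dx A) i m k + ps3_mult B (ps3_dy A) i m k + ps3_dt A i m k
      = A i m (k + 1) * of_nat (k + 1) + S1 - S2"
    unfolding S1_def S2_def
    using m mult_dx_m[where A=A and m=m and i=i and k=k, OF A0] mult_dy_m[where B=B and A=A and m=m and i=i and k=k, OF B0 B1 Bf]
    by (simp add: ps3_dt_def)
  have R: "ps3_dt (ps3_of_xt U) i m k + ps3_mult (ps3_of_xt U) (ps3_dx (ps3_of_xt U)) i m k
          + complex_of_real \<nu> * ps3_dy (ps3_dy A) i m k = c * A i (m + 2) k"
    unfolding ext_dt ext_mult c_def ps3_dy_def using m by (simp add: algebra_simps)
  have i1: "m + 2 - 3 = m - 1" "m + 2 - 2 = m" by auto
  have i2: "\<And>q. m + 2 - 2 - q = m - q" "\<And>q. m + 2 - 1 - q = m + 1 - q" by auto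
  have F: "F4 \<nu> A i (m + 2) k = 1 / c * (A i m (k + 1) * of_nat (k + 1) + S1 - S2)"
    unfolding F4_def S1_def S2_def c_def i1 i2 by (simp only: mult.assoc)
  show ?thesis unfolding momeq_def L R F solve_lin[OF c0] ..
qed

end

declare solA.simps[simp del]

definition solB :: "real \<Rightarrow> (nat \<Rightarrow> nat \<Rightarrow> complex) \<Rightarrow> (nat \<Rightarrow> nat \<Rightarrow> complex) \<Rightarrow> ps3" where
  "solB \<nu> U A1 i j k = (if j < 2 then 0 else - (of_nat (i + 1) / of_nat j) * solA \<nu> U A1 (i + 1) (j - 1) k)"

lemma key:
  assumes nu: "\<nu> > 0" and A0: "\<And>i k. A i 0 k = 0" and B0: "\<And>i k. B i 0 k = 0"
    and P: "prandtl \<nu> U A B"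
  shows "(\<forall>i k. B i 1 k = 0) \<and>
     (\<forall>i j k. j \<ge> 2 \<longrightarrow> B i j k = - (of_nat (i + 1) / of_nat j) * A (i + 1) (j - 1) k) \<and>
     (\<forall>i k. A i 2 k = F2 \<nu> U i k) \<and>
     (\<forall>i k. A i 3 k = of_nat (k + 1) * A i 1 (k + 1) / (6 * complex_of_real \<nu>)) \<and>
     (\<forall>i j k. j \<ge> 4 \<longrightarrow> A i j k = F4 \<nu> A i j k)"
proof -
  have M: "\<And>i j k. momeq \<nu> U A B i j k" and C: "\<And>i j k. ps3_dx A i j k + ps3_dy B i j k = 0"
    using P unfolding prandtl_iff by auto
  have B1: "\<And>i k. B i 1 k = 0" using C[of _ 0] unfolding cont_iff by (simp add: A0)
  have Bf: "\<And>i j k. j \<ge> 2 \<Longrightarrow> B i j k = - (of_nat (i + 1) / of_nat j) * A (i + 1) (j - 1) k"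
  proof -
    fix i j k assume "(j::nat) \<ge> 2"
    then have e: "j - 1 + 1 = j" by auto
    have "B i (j - 1 + 1) k = - (of_nat (i + 1) / of_nat (j - 1 + 1)) * A (i + 1) (j - 1) k"
      using C[of i "j - 1" k] unfolding cont_iff .
    then show "B i j k = - (of_nat (i + 1) / of_nat j) * A (i + 1) (j - 1) k"
      unfolding e .
  qed
  have BfH: "\<forall>i j k. j \<ge> 2 \<longrightarrow> B i j k = - (of_nat (i + 1) / of_nat j) * A (i + 1) (j - 1) k"
    using Bf by blast
  have A2: "\<And>i k. A i 2 k = F2 \<nu> U i k"
    by (rule mom0[where A=A and B=B and U=U, OF nu A0 B0 B1 BfH, THEN iffD1, OF M])
  have A3: "\<And>i k. A i 3 k = of_nat (k + 1) * A i 1 (k + 1) / (6 * complex_of_real \<nu>)"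
    by (rule mom1[where A=A and B=B and U=U, OF nu A0 B0 B1 BfH, THEN iffD1, OF M])
  have A4: "\<And>i j k. j \<ge> 4 \<Longrightarrow> A i j k = F4 \<nu> A i j k"
  proof -
    fix i j k assume j4: "(j::nat) \<ge> 4"
    have e: "j - 2 + 2 = j" and m2: "j - 2 \<ge> 2" using j4 by auto
    have "A i (j - 2 + 2) k = F4 \<nu> A i (j - 2 + 2) k" by (rule momm[where A=A and B=B and U=U, OF nu A0 B0 B1 BfH m2, THEN iffD1, OF M])
    then show "A i j k = F4 \<nu> A i j k" unfolding e .
  qed
  show ?thesis
    apply (intro conjI allI impI)
        apply (rule B1)
       apply (rule Bf, assumption)
      apply (rule A2)
     apply (rule A3)
    apply (rule A4, assumption)
    done
qed

lemma keyH:
  assumes nu: "\<nu> > 0" and "\<forall>i k. A i 0 k = 0" "\<forall>i k. B i 0 k = 0" "prandtl \<nu> U A B"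
  shows "(\<forall>i k. B i 1 k = 0) \<and>
     (\<forall>i k. A i 2 k = F2 \<nu> U i k) \<and>
     (\<forall>i k. A i 3 k = of_nat (k + 1) * A i 1 (k + 1) / (6 * complex_of_real \<nu>)) \<and>
     (\<forall>i j k. j \<ge> 2 \<longrightarrow> B i j k = - (of_nat (i + 1) / of_nat j) * A (i + 1) (j - 1) k) \<and>
     (\<forall>i j k. j \<ge> 4 \<longrightarrow> A i j k = F4 \<nu> A i j k)"
proof -
  have A0: "\<And>i k. A i 0 k = 0" and B0: "\<And>i k. B i 0 k = 0" using assms by auto
  show ?thesis using key[OF nu A0 B0 assms(4)] by (elim conjE) (intro conjI; assumption)
qed

lemma sol_G:
  assumes nu: "\<nu> > 0" and A0: "\<And>i k. A i 0 k = 0" and B0: "\<And>i k. B i 0 k = 0"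
    and A1: "\<And>i k. A i 1 k = A1 i k" and P: "prandtl \<nu> U A B"
  shows "A i j k = G \<nu> U A1 A i j k"
proof -
  note K = key[OF nu A0 B0 P]
  consider "j = 0" | "j = 1" | "j = 2" | "j = 3" | "j \<ge> 4" by arith
  then show ?thesis
  proof cases
    case 1 then show ?thesis using A0 unfolding G_def by simp
  next
    case 2 then show ?thesis using A1 unfolding G_def by simp
  next
    case 3 then show ?thesis using K unfolding G_def by simp
  next
    case 4 then show ?thesis using K A1 unfolding G_def F3_def by (simp only: numeral_eq_iff semiring_norm if_False if_True)
  next
    case 5
    then have "A i j k = F4 \<nu> A i j k" using K by blast
    then show ?thesis using 5 unfolding G_def by simp
  qed
qed

lemma sol_eq:
  assumes nu: "\<nu> > 0" and A0: "\<And>i k. A i 0 k = 0" and B0: "\<And>i k. B i 0 k = 0"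
    and A1: "\<And>i k. A i 1 k = A1 i k" and P: "prandtl \<nu> U A B"
  shows "A i j k = solA \<nu> U A1 i j k"
proof (induction j arbitrary: i k rule: less_induct)
  case (less j)
  have "A i j k = G \<nu> U A1 A i j k" by (rule sol_G[OF nu A0 B0 A1 P])
  also have "\<dots> = G \<nu> U A1 (solA \<nu> U A1) i j k"
    by (rule G_cong) (auto intro: less)
  also have "\<dots> = solA \<nu> U A1 i j k" by (rule solA.simps[symmetric])
  finally show ?case .
qed

lemma solA_exists:
  assumes nu: "\<nu> > 0"
  shows "(\<forall>i k. solA \<nu> U A1 i 0 k = 0) \<and> (\<forall>i k. solB \<nu> U A1 i 0 k = 0) \<and>
     (\<forall>i k. solA \<nu> U A1 i 1 k = A1 i k) \<and> prandtl \<nu> U (solA \<nu> U A1) (solB \<nu> U A1)"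
proof -
  let ?A = "solA \<nu> U A1" and ?B = "solB \<nu> U A1"
  have A0: "\<And>i k. ?A i 0 k = 0" by (subst solA.simps) (simp add: G_def)
  have A1': "\<And>i k. ?A i 1 k = A1 i k" by (subst solA.simps) (simp add: G_def)
  have A2: "\<And>i k. ?A i 2 k = F2 \<nu> U i k" by (subst solA.simps) (simp add: G_def)
  have A3: "\<And>i k. ?A i 3 k = F3 \<nu> A1 i k" by (subst solA.simps) (simp add: G_def)
  have A4: "\<And>i j k. j \<ge> 4 \<Longrightarrow> ?A i j k = F4 \<nu> ?A i j k" by (subst solA.simps) (simp add: G_def)
  have B0: "\<And>i k. ?B i 0 k = 0" by (simp add: solB_def)
  have B1: "\<And>i k. ?B i 1 k = 0" by (simp add: solB_def)
  have Bf: "\<And>i j k. j \<ge> 2 \<Longrightarrow> ?B i j k = - (of_nat (i + 1) / of_nat j) * ?A (i + 1) (j - 1) k"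
    by (simp add: solB_def)
  have BfH: "\<forall>i j k. j \<ge> 2 \<longrightarrow> ?B i j k = - (of_nat (i + 1) / of_nat j) * ?A (i + 1) (j - 1) k"
    using Bf by blast
  have M: "momeq \<nu> U ?A ?B i j k" for i j k
  proof -
    consider "j = 0" | "j = 1" | "j \<ge> 2" by arith
    then show ?thesis
    proof cases
      case 1 then show ?thesis using mom0[where A="?A" and B="?B" and U=U, OF nu A0 B0 B1 BfH, THEN iffD2, OF A2] by simp
    next
      case 2
      have "?A i 3 k = of_nat (k + 1) * ?A i 1 (k + 1) / (6 * complex_of_real \<nu>)"
        unfolding A3 A1' F3_def ..
      then show ?thesis using 2 mom1[where A="?A" and B="?B" and U=U, OF nu A0 B0 B1 BfH, THEN iffD2] by simp
    next
      case 3
      have "?A i (j + 2) k = F4 \<nu> ?A i (j + 2) k" by (rule A4) (use 3 in simp)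
      then show ?thesis by (rule momm[where A="?A" and B="?B" and U=U, OF nu A0 B0 B1 BfH 3, THEN iffD2])
    qed
  qed
  have C: "ps3_dx ?A i j k + ps3_dy ?B i j k = 0" for i j k
    unfolding cont_iff by (cases j) (simp_all add: solB_def A0)
  show ?thesis unfolding prandtl_iff by (intro conjI allI) (rule A0 B0 A1' M C)+
qed

theorem mainTheorem2:
  fixes \<nu> :: real and U :: "nat \<Rightarrow> nat \<Rightarrow> complex" and A1 :: "nat \<Rightarrow> nat \<Rightarrow> complex"
  assumes "\<nu> > 0"
  shows "(\<exists>!uv :: ps3 \<times> ps3.
            (\<forall>i k. fst uv i 0 k = 0) \<and> (\<forall>i k. snd uv i 0 k = 0) \<and>
            (\<forall>i k. fst uv i 1 k = A1 i k) \<and> prandtl \<nu> U (fst uv) (snd uv))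
   \<and> (\<forall>A B :: ps3.
        (\<forall>i k. A i 0 k = 0) \<and> (\<forall>i k. B i 0 k = 0) \<and>
        (\<forall>i k. A i 1 k = A1 i k) \<and> prandtl \<nu> U A B \<longrightarrow>
        (\<forall>i k. B i 1 k = 0) \<and>
        (\<forall>i k. A i 2 k = - (1 / (2 * complex_of_real \<nu>)) *
              (U i (k + 1) * of_nat (k + 1) +
               (\<Sum>p\<le>i. \<Sum>q\<le>k. of_nat (i - p + 1) * U p q * U (i - p + 1) (k - q)))) \<and>
        (\<forall>i k. A i 3 k = of_nat (k + 1) * A i 1 (k + 1) / (6 * complex_of_real \<nu>)) \<and>
        (\<forall>i j k. j \<ge> 2 \<longrightarrow> B i j k = - (of_nat (i + 1) / of_nat j) * A (i + 1) (j - 1) k) \<and>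
        (\<forall>i j k. j \<ge> 4 \<longrightarrow>
           A i j k = 1 / (complex_of_real \<nu> * of_nat j * of_nat (j - 1)) *
             (A i (j - 2) (k + 1) * of_nat (k + 1)
              + (\<Sum>p\<le>i. \<Sum>q\<in>{1..j - 3}. \<Sum>r\<le>k.
                   of_nat (i - p + 1) * A p q r * A (i - p + 1) (j - 2 - q) (k - r))
              - (\<Sum>p\<le>i. \<Sum>q\<in>{2..j - 2}. \<Sum>r\<le>k.
                   of_nat ((p + 1) * (j - 1 - q)) / of_nat q
                   * A (p + 1) (q - 1) r * A (i - p) (j - 1 - q) (k - r)))))"
proof -
  let ?P = "\<lambda>uv :: ps3 \<times> ps3. (\<forall>i k. fst uv i 0 k = 0) \<and> (\<forall>i k. snd uv i 0 k = 0) \<and>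
            (\<forall>i k. fst uv i 1 k = A1 i k) \<and> prandtl \<nu> U (fst uv) (snd uv)"
  have part2: "\<forall>A B :: ps3.
        (\<forall>i k. A i 0 k = 0) \<and> (\<forall>i k. B i 0 k = 0) \<and>
        (\<forall>i k. A i 1 k = A1 i k) \<and> prandtl \<nu> U A B \<longrightarrow>
        (\<forall>i k. B i 1 k = 0) \<and>
        (\<forall>i k. A i 2 k = - (1 / (2 * complex_of_real \<nu>)) *
              (U i (k + 1) * of_nat (k + 1) +
               (\<Sum>p\<le>i. \<Sum>q\<le>k. of_nat (i - p + 1) * U p q * U (i - p + 1) (k - q)))) \<and>
        (\<forall>i k. A i 3 k = of_nat (k + 1) * A i 1 (k + 1) / (6 * complex_of_real \<nu>)) \<and>
        (\<forall>i j k. j \<ge> 2 \<longrightarrow> B i j k = - (of_nat (i + 1) / of_nat j) * A (i + 1) (j - 1) k) \<and>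
        (\<forall>i j k. j \<ge> 4 \<longrightarrow>
           A i j k = 1 / (complex_of_real \<nu> * of_nat j * of_nat (j - 1)) *
             (A i (j - 2) (k + 1) * of_nat (k + 1)
              + (\<Sum>p\<le>i. \<Sum>q\<in>{1..j - 3}. \<Sum>r\<le>k.
                   of_nat (i - p + 1) * A p q r * A (i - p + 1) (j - 2 - q) (k - r))
              - (\<Sum>p\<le>i. \<Sum>q\<in>{2..j - 2}. \<Sum>r\<le>k.
                   of_nat ((p + 1) * (j - 1 - q)) / of_nat q
                   * A (p + 1) (q - 1) r * A (i - p) (j - 1 - q) (k - r))))"
    apply (intro allI impI)
    subgoal for A B by (rule keyH[OF assms, where A=A and B=B and U=U, unfolded F2_def F4_def]) blast+
    done
  have ex: "?P (solA \<nu> U A1, solB \<nu> U A1)" using solA_exists[OF assms] unfolding fst_conv snd_conv .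
  have un: "uv = (solA \<nu> U A1, solB \<nu> U A1)" if "?P uv" for uv
  proof -
    obtain A B where uv: "uv = (A, B)" by (cases uv)
    have h: "(\<forall>i k. A i 0 k = 0) \<and> (\<forall>i k. B i 0 k = 0) \<and>
            (\<forall>i k. A i 1 k = A1 i k) \<and> prandtl \<nu> U A B" using that unfolding uv fst_conv snd_conv .
    then have A0: "\<And>i k. A i 0 k = 0" and B0: "\<And>i k. B i 0 k = 0" and A1': "\<And>i k. A i 1 k = A1 i k"
      and P: "prandtl \<nu> U A B" by blast+
    have eA: "A = solA \<nu> U A1" using sol_eq[OF assms A0 B0 A1' P] by (intro ext)
    have eB: "B = solB \<nu> U A1"
    proof (intro ext)
      fix i j k
      show "B i j k = solB \<nu> U A1 i j k"
      proof -
        note K = key[OF assms A0 B0 P]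
        consider "j = 0" | "j = 1" | "j \<ge> 2" by arith
        then show ?thesis
        proof cases
          case 1 then show ?thesis using B0 unfolding solB_def by simp
        next
          case 2
          have b: "B i 1 k = 0" using K by blast
          have s: "solB \<nu> U A1 i 1 k = 0" unfolding solB_def by simp
          show ?thesis using b s 2 by simp
        next
          case 3
          then have "B i j k = - (of_nat (i + 1) / of_nat j) * A (i + 1) (j - 1) k" using K by blast
          then show ?thesis using 3 unfolding solB_def eA by simp
        qed
      qed
    qed
    show ?thesis by (simp only: uv eA eB)
  qed
  have "\<exists>!uv. ?P uv" by (rule ex1I[of ?P, OF ex un])
  then show ?thesis using part2 by (rule conjI)
qed

end
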